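(* Fix an MDP $M$ and a layer $h\in[H]$. Suppose we have a sequence of functions $g^{(1)},\dots,g^{(T)}:\mathcal{X}\times\mathcal{A}\to[0,B]$ and policies $\pi^{(1)},\dots,\pi^{(T)}\in\Pi$ such that for all $t\in[T]$, $\sum_{i<t}\mathbb{E}^{M,\pi^{(i)}}[(g^{(t)}(x_h,a_h))^2]\le\beta^2$. Then $$\sum_{t=1}^T\mathbb{E}^{M,\pi^{(t)}}[g^{(t)}(x_h,a_h)]\le 2(C^M_{1;h})^{1/3}(\beta^2B+B^3)^{1/3}T^{2/3}.$$
   Context: Episodic MDP $M$ over countable $\mathcal{X}$, actions $\mathcal{A}$, horizon $H$; $\Pi\subseteq\Pi_{\mathrm{RNS}}$ a policy class; $d^{M,\pi}_h(x,a)$ the layer-$h$ occupancy; $C^M_{1;h}=\inf_{\mu\in\Delta(\mathcal{X}\times\mathcal{A})}\sup_{\pi\in\Pi}\mathbb{E}^{M,\pi}\big[\frac{d^{M,\pi}_h(x_h,a_h)}{\mu(x_h,a_h)}\big]$. *)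

theory Defs
  imports "HOL-Probability.Probability"
begin

text \<open>Episodic MDP over a countable state space 'x and action space 'a.
  Layers are numbered 1..H.  trans h x a is the law of x_{h+1} given (x_h,a_h)=(x,a).\<close>
record ('x, 'a) mdp =
  init  :: "'x pmf"
  trans :: "nat \<Rightarrow> 'x \<Rightarrow> 'a \<Rightarrow> 'x pmf"

type_synonym ('x, 'a) policy = "nat \<Rightarrow> 'x \<Rightarrow> 'a pmf"

text \<open>state_dist M p n = law of x_{n+1} under M and p.\<close>
primrec state_dist :: "('x, 'a) mdp \<Rightarrow> ('x, 'a) policy \<Rightarrow> nat \<Rightarrow> 'x pmf" where
  "state_dist M p 0 = init M"
| "state_dist M p (Suc n) =
     bind_pmf (state_dist M p n)
       (\<lambda>x. bind_pmf (p (Suc n) x) (\<lambda>a. trans M (Suc n) x a))"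

text \<open>Layer-h occupancy d^{M,p}_h (h >= 1): law of (x_h, a_h).\<close>
definition occ :: "('x, 'a) mdp \<Rightarrow> ('x, 'a) policy \<Rightarrow> nat \<Rightarrow> ('x \<times> 'a) pmf" where
  "occ M p h = bind_pmf (state_dist M p (h - 1)) (\<lambda>x. map_pmf (\<lambda>a. (x, a)) (p h x))"

definition expect :: "('x, 'a) mdp \<Rightarrow> ('x, 'a) policy \<Rightarrow> nat \<Rightarrow> ('x \<times> 'a \<Rightarrow> real) \<Rightarrow> real" where
  "expect M p h f = measure_pmf.expectation (occ M p h) f"

text \<open>Coverability coefficient C^M_{1;h} (as an extended nonnegative real; a ratio with
  mu = 0 and d > 0 is +infinity).\<close>
definition cov1 :: "('x, 'a) mdp \<Rightarrow> ('x, 'a) policy set \<Rightarrow> nat \<Rightarrow> ennreal" where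
  "cov1 M PP h = (INF mu :: ('x \<times> 'a) pmf. SUP p \<in> PP.
      \<integral>\<^sup>+ z. ennreal (pmf (occ M p h) z) / ennreal (pmf mu z) \<partial>(measure_pmf (occ M p h)))"

end

theory Submission
  imports Defs
begin

lemma expect_nn:
  fixes p :: "'z pmf"
  assumes "\<And>z. 0 \<le> f z" "\<And>z. f z \<le> K"
  shows "ennreal (measure_pmf.expectation p f) = (\<integral>\<^sup>+ z. ennreal (pmf p z * f z) \<partial>count_space UNIV)"
proof -
  have int: "integrable (measure_pmf p) f"
    by (rule measure_pmf.integrable_const_bound[of _ K]) (use assms in auto)
  have "ennreal (measure_pmf.expectation p f) = (\<integral>\<^sup>+ z. ennreal (f z) \<partial>measure_pmf p)"
    using nn_integral_eq_integral[OF int] assms by simp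
  also have "\<dots> = (\<integral>\<^sup>+ z. ennreal (pmf p z * f z) \<partial>count_space UNIV)"
    by (simp add: nn_integral_measure_pmf ennreal_mult')
  finally show ?thesis .
qed

lemma burnin:
  fixes a :: "nat \<Rightarrow> real"
  assumes "\<And>i. 0 \<le> a i" "0 \<le> c"
  shows "(\<Sum>t\<in>{1..T}. if (\<Sum>i\<in>{1..t}. a i) < c then a t else 0) \<le> min (\<Sum>i\<in>{1..T}. a i) c"
proof (induction T)
  case 0 then show ?case using assms by simp
next
  case (Suc T)
  have S: "(\<Sum>i\<in>{1..Suc T}. a i) = (\<Sum>i\<in>{1..T}. a i) + a (Suc T)" by simp
  have "(\<Sum>t\<in>{1..Suc T}. if (\<Sum>i\<in>{1..t}. a i) < c then a t else 0) = (\<Sum>t\<in>{1..T}. if (\<Sum>i\<in>{1..t}. a i) < c then a t else 0) + (if (\<Sum>i\<in>{1..Suc T}. a i) < c then a (Suc T) else 0)" by simp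
  then show ?case using Suc.IH S assms(1)[of "Suc T"] by (auto simp: min_def split: if_splits)
qed

lemma amgm:
  fixes d g u v :: real
  assumes "0 < u" "0 < v"
  shows "d * g \<le> d\<^sup>2 / (2 * u * v) + u/2 * v * g\<^sup>2"
proof -
  have "0 \<le> (d - u * v * g)\<^sup>2" by simp
  then have "2 * u * v * (d * g) \<le> d\<^sup>2 + (u * v * g)\<^sup>2" by (simp add: power2_eq_square algebra_simps)
  moreover have "d\<^sup>2 / (2 * u * v) + u/2 * v * g\<^sup>2 = (d\<^sup>2 + (u * v * g)\<^sup>2) / (2 * u * v)"
    using assms by (simp add: field_simps power2_eq_square)
  ultimately show ?thesis using assms by (simp add: pos_le_divide_eq mult.commute mult.left_commute)
qed

lemma core0:
  fixes p :: "nat \<Rightarrow> 'z pmf" and mu :: "'z pmf" and g :: "nat \<Rightarrow> 'z \<Rightarrow> real"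
  assumes gb: "\<And>t z. t \<in> {1..T} \<Longrightarrow> 0 \<le> g t z \<and> g t z \<le> B"
    and cov: "\<And>t. t \<in> {1..T} \<Longrightarrow> (\<integral>\<^sup>+ z. ennreal (pmf (p t) z) / ennreal (pmf mu z) \<partial>measure_pmf (p t)) \<le> ennreal Cp"
    and hyp: "\<And>t. t \<in> {1..T} \<Longrightarrow> (\<Sum>i\<in>{1..<t}. measure_pmf.expectation (p i) (\<lambda>z. (g t z)\<^sup>2)) \<le> b2"
    and lam: "0 < lam" and s: "0 < s" and B: "0 \<le> B" and Cp: "0 \<le> Cp" and b2: "0 \<le> b2"
  shows "(\<Sum>t\<in>{1..T}. measure_pmf.expectation (p t) (g t))
     \<le> B * lam + real T * (Cp / (2 * s * lam) + s / 2 * (b2 + B\<^sup>2))"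
proof -
  define d where "d t z = pmf (p t) z" for t z
  define D where "D t z = (\<Sum>i\<in>{1..<t}. d i z)" for t z
  define bad where "bad t z \<longleftrightarrow> D t z + d t z < lam * pmf mu z" for t z
  have d0: "0 \<le> d t z" for t z unfolding d_def by simp
  have D0: "0 \<le> D t z" for t z unfolding D_def using d0 by (simp add: sum_nonneg)
  define A where "A t z = ennreal (B * (if bad t z then d t z else 0))" for t z
  define Mid where "Mid t z = ennreal (1 / (2 * s * lam)) * (ennreal (d t z) * (ennreal (d t z) / ennreal (pmf mu z)))" for t z
  define Q where "Q t z = ennreal (s / 2 * (D t z + d t z) * (g t z)\<^sup>2)" for t z
  have pw: "ennreal (d t z * g t z) \<le> A t z + Mid t z + Q t z" if t: "t \<in> {1..T}" for t z
  proof (cases "bad t z")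
    case True
    have "d t z * g t z \<le> B * d t z" using gb[OF t, of z] d0[of t z] by (metis mult.commute mult_left_mono)
    then have "ennreal (d t z * g t z) \<le> A t z" unfolding A_def using True by (simp add: ennreal_leI)
    then show ?thesis by (simp add: add.assoc add_increasing2)
  next
    case False
    show ?thesis
    proof (cases "pmf mu z = 0")
      case True
      show ?thesis
      proof (cases "d t z = 0")
        case True then show ?thesis by simp
      next
        case False
        have "Mid t z = top" unfolding Mid_def using False d0[of t z] \<open>pmf mu z = 0\<close> s lam
          by (simp add: ennreal_top_mult_left)
        then show ?thesis by simp
      qed
    next
      case mu: False
      then have mupos: "0 < pmf mu z" using pmf_nonneg[of mu z] by linarith
      define w where "w = D t z + d t z"
      have lw: "lam * pmf mu z \<le> w" using False unfolding bad_def w_def by simp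
      have wpos: "0 < w" using lw lam mupos by (smt (verit) mult_pos_pos)
      have Mid_eq: "Mid t z = ennreal ((d t z)\<^sup>2 / (2 * s * (lam * pmf mu z)))"
        unfolding Mid_def using mupos s lam d0[of t z]
        by (simp add: divide_ennreal ennreal_mult[symmetric] power2_eq_square field_simps)
      have Q_eq: "Q t z = ennreal (s / 2 * w * (g t z)\<^sup>2)" unfolding Q_def w_def by simp
      have "d t z * g t z \<le> (d t z)\<^sup>2 / (2 * s * w) + s / 2 * w * (g t z)\<^sup>2"
        by (rule amgm[OF s wpos])
      also have "(d t z)\<^sup>2 / (2 * s * w) \<le> (d t z)\<^sup>2 / (2 * s * (lam * pmf mu z))"
        using lw s lam mupos wpos by (intro divide_left_mono) auto
      finally have r: "d t z * g t z \<le> (d t z)\<^sup>2 / (2 * s * (lam * pmf mu z)) + s / 2 * w * (g t z)\<^sup>2"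
        by simp
      have "ennreal (d t z * g t z) \<le> ennreal ((d t z)\<^sup>2 / (2 * s * (lam * pmf mu z)) + s / 2 * w * (g t z)\<^sup>2)"
        using r by (rule ennreal_leI)
      also have "\<dots> = Mid t z + Q t z" unfolding Mid_eq Q_eq
        using s lam mupos wpos by (intro ennreal_plus) auto
      also have "\<dots> \<le> A t z + Mid t z + Q t z" by (simp add: add.assoc)
      finally show ?thesis .
    qed
  qed

  let ?c = "count_space UNIV"
  define E where "E t = measure_pmf.expectation (p t) (g t)" for t
  have Et: "ennreal (E t) = (\<integral>\<^sup>+ z. ennreal (d t z * g t z) \<partial>?c)" if t: "t \<in> {1..T}" for t
    unfolding E_def d_def by (rule expect_nn[of "g t" B]) (use gb[OF t] in auto)
  have E0: "0 \<le> E t" if t: "t \<in> {1..T}" for t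
    unfolding E_def using gb[OF t] by (simp add: integral_nonneg)
  have LHS: "ennreal (\<Sum>t\<in>{1..T}. E t) = (\<Sum>t\<in>{1..T}. \<integral>\<^sup>+ z. ennreal (d t z * g t z) \<partial>?c)"
  proof -
    have "ennreal (\<Sum>t\<in>{1..T}. E t) = (\<Sum>t\<in>{1..T}. ennreal (E t))"
      by (rule sum_ennreal[symmetric]) (use E0 in auto)
    also have "\<dots> = (\<Sum>t\<in>{1..T}. \<integral>\<^sup>+ z. ennreal (d t z * g t z) \<partial>?c)"
      by (rule sum.cong) (use Et in auto)
    finally show ?thesis .
  qed
  have s1: "(\<Sum>t\<in>{1..T}. \<integral>\<^sup>+ z. ennreal (d t z * g t z) \<partial>?c)
      \<le> (\<Sum>t\<in>{1..T}. \<integral>\<^sup>+ z. A t z + Mid t z + Q t z \<partial>?c)"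
    by (intro sum_mono nn_integral_mono pw) auto
  have s2: "(\<Sum>t\<in>{1..T}. \<integral>\<^sup>+ z. A t z + Mid t z + Q t z \<partial>?c)
     = (\<Sum>t\<in>{1..T}. \<integral>\<^sup>+ z. A t z \<partial>?c) + (\<Sum>t\<in>{1..T}. \<integral>\<^sup>+ z. Mid t z \<partial>?c)
       + (\<Sum>t\<in>{1..T}. \<integral>\<^sup>+ z. Q t z \<partial>?c)"
    by (simp add: nn_integral_add sum.distrib)
  have pmf1: "(\<integral>\<^sup>+ z. ennreal (pmf q z) \<partial>?c) = 1" for q :: "'z pmf"
    using nn_integral_measure_pmf[of q "\<lambda>_. 1"] measure_pmf.emeasure_space_1[of q] by simp
  have tA: "(\<Sum>t\<in>{1..T}. \<integral>\<^sup>+ z. A t z \<partial>?c) \<le> ennreal (B * lam)"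
  proof -
    have "(\<Sum>t\<in>{1..T}. \<integral>\<^sup>+ z. A t z \<partial>?c) = (\<integral>\<^sup>+ z. (\<Sum>t\<in>{1..T}. A t z) \<partial>?c)"
      by (rule nn_integral_sum[symmetric]) simp
    also have "\<dots> \<le> (\<integral>\<^sup>+ z. ennreal (B * lam) * ennreal (pmf mu z) \<partial>?c)"
    proof (intro nn_integral_mono)
      fix z
      have eq: "(\<Sum>t\<in>{1..T}. if bad t z then d t z else 0)
          = (\<Sum>t\<in>{1..T}. if (\<Sum>i\<in>{1..t}. d i z) < lam * pmf mu z then d t z else 0)"
      proof (intro sum.cong refl)
        fix t assume "t \<in> {1..T}"
        then have "(\<Sum>i\<in>{1..t}. d i z) = D t z + d t z"
          unfolding D_def by (simp add: atLeastLessThanSuc_atLeastAtMost[symmetric])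
        then show "(if bad t z then d t z else 0) = (if (\<Sum>i\<in>{1..t}. d i z) < lam * pmf mu z then d t z else 0)"
          unfolding bad_def by simp
      qed
      have "(\<Sum>t\<in>{1..T}. if bad t z then d t z else 0) \<le> lam * pmf mu z"
        unfolding eq using burnin[of "\<lambda>i. d i z" "lam * pmf mu z" T] d0 lam by simp
      then have "B * (\<Sum>t\<in>{1..T}. if bad t z then d t z else 0) \<le> B * (lam * pmf mu z)"
        using B by (rule mult_left_mono)
      moreover have "(\<Sum>t\<in>{1..T}. A t z) = ennreal (B * (\<Sum>t\<in>{1..T}. if bad t z then d t z else 0))"
        unfolding A_def using B d0 by (simp add: sum_ennreal sum_distrib_left)
      ultimately show "(\<Sum>t\<in>{1..T}. A t z) \<le> ennreal (B * lam) * ennreal (pmf mu z)"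
        using B lam by (simp add: ennreal_mult[symmetric] ennreal_leI mult.assoc)
    qed
    also have "\<dots> = ennreal (B * lam)"
      by (simp add: nn_integral_cmult pmf1)
    finally show ?thesis .
  qed
  have tM: "(\<integral>\<^sup>+ z. Mid t z \<partial>?c) \<le> ennreal (Cp / (2 * s * lam))" if t: "t \<in> {1..T}" for t
  proof -
    have "(\<integral>\<^sup>+ z. Mid t z \<partial>?c) = ennreal (1 / (2 * s * lam)) *
        (\<integral>\<^sup>+ z. ennreal (d t z) * (ennreal (d t z) / ennreal (pmf mu z)) \<partial>?c)"
      unfolding Mid_def by (simp add: nn_integral_cmult)
    also have "(\<integral>\<^sup>+ z. ennreal (d t z) * (ennreal (d t z) / ennreal (pmf mu z)) \<partial>?c)
        = (\<integral>\<^sup>+ z. ennreal (pmf (p t) z) / ennreal (pmf mu z) \<partial>measure_pmf (p t))"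
      unfolding d_def by (simp add: nn_integral_measure_pmf)
    also have "ennreal (1 / (2 * s * lam)) * \<dots> \<le> ennreal (1 / (2 * s * lam)) * ennreal Cp"
      by (intro mult_left_mono cov t) simp
    also have "\<dots> = ennreal (Cp / (2 * s * lam))"
      using s lam by (subst ennreal_mult'[symmetric]) auto
    finally show ?thesis .
  qed
  have tQ: "(\<integral>\<^sup>+ z. Q t z \<partial>?c) \<le> ennreal (s / 2 * (b2 + B\<^sup>2))" if t: "t \<in> {1..T}" for t
  proof -
    have gsq: "0 \<le> (g t z)\<^sup>2 \<and> (g t z)\<^sup>2 \<le> B\<^sup>2" for z
      using gb[OF t, of z] by (simp add: power_mono)
    have Qeq: "Q t z = ennreal (s / 2) * ((\<Sum>i\<in>{1..<t}. ennreal (d i z * (g t z)\<^sup>2)) + ennreal (d t z * (g t z)\<^sup>2))" for z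
    proof -
      have nn: "0 \<le> d i z * (g t z)\<^sup>2" for i using d0[of i z] by simp
      have "Q t z = ennreal (s / 2 * ((\<Sum>i\<in>{1..<t}. d i z * (g t z)\<^sup>2) + d t z * (g t z)\<^sup>2))"
        unfolding Q_def D_def sum_distrib_right[symmetric] by (simp add: algebra_simps)
      also have "\<dots> = ennreal (s / 2) * (ennreal (\<Sum>i\<in>{1..<t}. d i z * (g t z)\<^sup>2) + ennreal (d t z * (g t z)\<^sup>2))"
      proof -
        have X0: "0 \<le> (\<Sum>i\<in>{1..<t}. d i z * (g t z)\<^sup>2)" by (intro sum_nonneg nn)
        have "ennreal (s / 2 * ((\<Sum>i\<in>{1..<t}. d i z * (g t z)\<^sup>2) + d t z * (g t z)\<^sup>2))
           = ennreal (s / 2) * ennreal ((\<Sum>i\<in>{1..<t}. d i z * (g t z)\<^sup>2) + d t z * (g t z)\<^sup>2)"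
          by (rule ennreal_mult') (use s in simp)
        also have "ennreal ((\<Sum>i\<in>{1..<t}. d i z * (g t z)\<^sup>2) + d t z * (g t z)\<^sup>2)
           = ennreal (\<Sum>i\<in>{1..<t}. d i z * (g t z)\<^sup>2) + ennreal (d t z * (g t z)\<^sup>2)"
          by (rule ennreal_plus) (use X0 nn in auto)
        finally show ?thesis .
      qed
      also have "ennreal (\<Sum>i\<in>{1..<t}. d i z * (g t z)\<^sup>2) = (\<Sum>i\<in>{1..<t}. ennreal (d i z * (g t z)\<^sup>2))"
        using nn by (simp add: sum_ennreal)
      finally show ?thesis .
    qed
    have "(\<integral>\<^sup>+ z. Q t z \<partial>?c) = ennreal (s / 2) * ((\<Sum>i\<in>{1..<t}. \<integral>\<^sup>+ z. ennreal (d i z * (g t z)\<^sup>2) \<partial>?c)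
          + (\<integral>\<^sup>+ z. ennreal (d t z * (g t z)\<^sup>2) \<partial>?c))"
      unfolding Qeq by (simp add: nn_integral_cmult nn_integral_add nn_integral_sum)
    also have "(\<Sum>i\<in>{1..<t}. \<integral>\<^sup>+ z. ennreal (d i z * (g t z)\<^sup>2) \<partial>?c)
        = (\<Sum>i\<in>{1..<t}. ennreal (measure_pmf.expectation (p i) (\<lambda>z. (g t z)\<^sup>2)))"
      unfolding d_def using gsq by (intro sum.cong refl expect_nn[symmetric]) auto
    also have "\<dots> = ennreal (\<Sum>i\<in>{1..<t}. measure_pmf.expectation (p i) (\<lambda>z. (g t z)\<^sup>2))"
      by (rule sum_ennreal) (simp add: integral_nonneg)
    also have "\<dots> \<le> ennreal b2" using hyp[OF t] by (rule ennreal_leI)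
    also have "(\<integral>\<^sup>+ z. ennreal (d t z * (g t z)\<^sup>2) \<partial>?c) \<le> (\<integral>\<^sup>+ z. ennreal (B\<^sup>2) * ennreal (pmf (p t) z) \<partial>?c)"
    proof (intro nn_integral_mono)
      fix z
      have "d t z * (g t z)\<^sup>2 \<le> B\<^sup>2 * d t z" using gsq[of z] d0[of t z]
        by (metis mult.commute mult_left_mono)
      then show "ennreal (d t z * (g t z)\<^sup>2) \<le> ennreal (B\<^sup>2) * ennreal (pmf (p t) z)"
        unfolding d_def by (simp add: ennreal_mult[symmetric] ennreal_leI)
    qed
    also have "\<dots> = ennreal (B\<^sup>2)" by (simp add: nn_integral_cmult pmf1)
    also have "ennreal (s / 2) * (ennreal b2 + ennreal (B\<^sup>2)) = ennreal (s / 2 * (b2 + B\<^sup>2))"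
    proof -
      have "ennreal b2 + ennreal (B\<^sup>2) = ennreal (b2 + B\<^sup>2)" using b2 by (simp add: ennreal_plus)
      moreover have "ennreal (s / 2 * (b2 + B\<^sup>2)) = ennreal (s / 2) * ennreal (b2 + B\<^sup>2)"
        by (rule ennreal_mult') (use s in simp)
      ultimately show ?thesis by simp
    qed
    finally show ?thesis by (simp add: mult_left_mono add_mono)
  qed
  have "ennreal (\<Sum>t\<in>{1..T}. E t) \<le> ennreal (B * lam) + (\<Sum>t\<in>{1..T}. ennreal (Cp / (2 * s * lam)))
        + (\<Sum>t\<in>{1..T}. ennreal (s / 2 * (b2 + B\<^sup>2)))"
    unfolding LHS
  proof -
    note s1
    also note s2
    also have "(\<Sum>t\<in>{1..T}. \<integral>\<^sup>+ z. A t z \<partial>?c) + (\<Sum>t\<in>{1..T}. \<integral>\<^sup>+ z. Mid t z \<partial>?c)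
       + (\<Sum>t\<in>{1..T}. \<integral>\<^sup>+ z. Q t z \<partial>?c) \<le> ennreal (B * lam) + (\<Sum>t\<in>{1..T}. ennreal (Cp / (2 * s * lam)))
        + (\<Sum>t\<in>{1..T}. ennreal (s / 2 * (b2 + B\<^sup>2)))"
      by (intro add_mono tA sum_mono tM tQ)
    finally show "(\<Sum>t\<in>{1..T}. \<integral>\<^sup>+ z. ennreal (d t z * g t z) \<partial>?c) \<le> ennreal (B * lam) + (\<Sum>t\<in>{1..T}. ennreal (Cp / (2 * s * lam)))
        + (\<Sum>t\<in>{1..T}. ennreal (s / 2 * (b2 + B\<^sup>2)))" .
  qed
  also have "\<dots> = ennreal (B * lam + real T * (Cp / (2 * s * lam) + s / 2 * (b2 + B\<^sup>2)))"
  proof -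
    have X0: "0 \<le> Cp / (2 * s * lam)" using s lam Cp by simp
    have Y0: "0 \<le> s / 2 * (b2 + B\<^sup>2)" using s b2 by simp
    define X where "X = Cp / (2 * s * lam)"
    define Y where "Y = s / 2 * (b2 + B\<^sup>2)"
    have a: "(\<Sum>t\<in>{1..T}. ennreal X) = ennreal (real T * X)"
    proof -
      have "(\<Sum>t\<in>{1..T}. ennreal X) = ennreal (\<Sum>t\<in>{1..T}. X)" by (rule sum_ennreal) (use X0 X_def in simp)
      then show ?thesis by simp
    qed
    have b: "(\<Sum>t\<in>{1..T}. ennreal Y) = ennreal (real T * Y)"
    proof -
      have "(\<Sum>t\<in>{1..T}. ennreal Y) = ennreal (\<Sum>t\<in>{1..T}. Y)" by (rule sum_ennreal) (use Y0 Y_def in simp)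
      then show ?thesis by simp
    qed
    have BL: "0 \<le> B * lam" using B lam by simp
    have TX: "0 \<le> real T * X" using X0 unfolding X_def by (intro mult_nonneg_nonneg) auto
    have TY: "0 \<le> real T * Y" using Y0 unfolding Y_def by simp
    have p1: "ennreal (B * lam) + ennreal (real T * X) = ennreal (B * lam + real T * X)"
      by (rule ennreal_plus[symmetric]) (use BL TX in auto)
    have p2: "ennreal (B * lam + real T * X) + ennreal (real T * Y) = ennreal (B * lam + real T * X + real T * Y)"
      by (rule ennreal_plus[symmetric]) (use BL TX TY in auto)
    show ?thesis unfolding X_def[symmetric] Y_def[symmetric] a b p1 p2
      by (simp add: distrib_left add.assoc)
  qed
  finally have fin: "ennreal (\<Sum>t\<in>{1..T}. E t) \<le> ennreal (B * lam + real T * (Cp / (2 * s * lam) + s / 2 * (b2 + B\<^sup>2)))" .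
  have "0 \<le> B * lam + real T * (Cp / (2 * s * lam) + s / 2 * (b2 + B\<^sup>2))"
    using s lam B Cp b2 by (intro add_nonneg_nonneg mult_nonneg_nonneg) auto
  then show ?thesis using fin unfolding E_def by (simp only: ennreal_le_iff)
qed

lemma alg:
  fixes k bb u q :: real
  assumes "0 < k" "0 < bb" "0 < u" "0 < q"
  shows "bb ^ 3 * (u\<^sup>2 * k / bb\<^sup>2) + u ^ 3 * ((k ^ 3 / q) / (2 * (k * bb / (u * q)) * (u\<^sup>2 * k / bb\<^sup>2))
     + (k * bb / (u * q)) / 2 * q) = 2 * u\<^sup>2 * k * bb"
  using assms by (simp add: field_simps power2_eq_square power3_eq_cube)

lemma cube: "0 < (x::real) \<Longrightarrow> (x powr (1/3)) ^ 3 = x"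
  by (simp add: powr_power)

lemma core1:
  fixes p :: "nat \<Rightarrow> 'z pmf" and mu :: "'z pmf" and g :: "nat \<Rightarrow> 'z \<Rightarrow> real"
  assumes gb: "\<And>t z. t \<in> {1..T} \<Longrightarrow> 0 \<le> g t z \<and> g t z \<le> B"
    and cov: "\<And>t. t \<in> {1..T} \<Longrightarrow> (\<integral>\<^sup>+ z. ennreal (pmf (p t) z) / ennreal (pmf mu z) \<partial>measure_pmf (p t)) \<le> ennreal Cp"
    and hyp: "\<And>t. t \<in> {1..T} \<Longrightarrow> (\<Sum>i\<in>{1..<t}. measure_pmf.expectation (p i) (\<lambda>z. (g t z)\<^sup>2)) \<le> b2"
    and B: "0 < B" and Cp: "0 < Cp" and b2: "0 \<le> b2" and T: "0 < T"
  shows "(\<Sum>t\<in>{1..T}. measure_pmf.expectation (p t) (g t))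
     \<le> 2 * Cp powr (1/3) * (b2 * B + B ^ 3) powr (1/3) * real T powr (2/3)"
proof -
  define q where "q = b2 + B\<^sup>2"
  have q: "0 < q" unfolding q_def using B b2 by (simp add: add_nonneg_pos)
  define k where "k = (Cp * q) powr (1/3)"
  define bb where "bb = B powr (1/3)"
  define u where "u = real T powr (1/3)"
  have k: "0 < k" unfolding k_def using Cp q by simp
  have bb: "0 < bb" unfolding bb_def using B by simp
  have u: "0 < u" unfolding u_def using T by simp
  have k3: "k ^ 3 = Cp * q" unfolding k_def using Cp q by (simp add: cube)
  have bb3: "bb ^ 3 = B" unfolding bb_def using B by (simp add: cube)
  have u3: "u ^ 3 = real T" unfolding u_def using T by (simp add: cube)
  have Cpq: "Cp = k ^ 3 / q" using k3 q by simp
  define lam where "lam = u\<^sup>2 * k / bb\<^sup>2"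
  define s where "s = k * bb / (u * q)"
  have lam: "0 < lam" unfolding lam_def using u k bb by simp
  have s: "0 < s" unfolding s_def using u k bb q by simp
  have "(\<Sum>t\<in>{1..T}. measure_pmf.expectation (p t) (g t))
     \<le> B * lam + real T * (Cp / (2 * s * lam) + s / 2 * (b2 + B\<^sup>2))"
    by (rule core0[OF gb cov hyp lam s]) (use B Cp b2 in auto)
  also have "\<dots> = 2 * u\<^sup>2 * k * bb"
    unfolding q_def[symmetric] lam_def s_def
    using alg[OF k bb u q] by (simp only: Cpq bb3[symmetric] u3[symmetric])
  also have "\<dots> = 2 * Cp powr (1/3) * (b2 * B + B ^ 3) powr (1/3) * real T powr (2/3)"
  proof -
    have "b2 * B + B ^ 3 = q * B" unfolding q_def by (simp add: algebra_simps power2_eq_square power3_eq_cube)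
    then have "Cp powr (1/3) * (b2 * B + B ^ 3) powr (1/3) = k * bb"
      unfolding k_def bb_def by (simp add: powr_mult mult.assoc)
    moreover have "real T powr (2/3) = u\<^sup>2" unfolding u_def using T by (simp add: powr_power)
    ultimately show ?thesis by (simp add: mult.assoc mult.commute mult.left_commute)
  qed
  finally show ?thesis .
qed

theorem lemmaI8:
  fixes M :: "('x :: countable, 'a) mdp"
    and PP :: "('x, 'a) policy set"
    and H h T :: nat
    and g :: "nat \<Rightarrow> 'x \<times> 'a \<Rightarrow> real"
    and pol :: "nat \<Rightarrow> ('x, 'a) policy"
    and B \<beta> :: real
  assumes "h \<in> {1..H}"
    and "\<And>t z. t \<in> {1..T} \<Longrightarrow> 0 \<le> g t z \<and> g t z \<le> B"
    and "\<And>t. t \<in> {1..T} \<Longrightarrow> pol t \<in> PP"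
    and "\<And>t. t \<in> {1..T} \<Longrightarrow>
           (\<Sum>i\<in>{1..<t}. expect M (pol i) h (\<lambda>z. (g t z)\<^sup>2)) \<le> \<beta>\<^sup>2"
  shows "cov1 M PP h \<noteq> \<top> \<longrightarrow>
    (\<Sum>t\<in>{1..T}. expect M (pol t) h (g t))
      \<le> 2 * enn2real (cov1 M PP h) powr (1/3) * (\<beta>\<^sup>2 * B + B ^ 3) powr (1/3)
          * real T powr (2/3)"
proof
  assume ne: "cov1 M PP h \<noteq> \<top>"
  note gb = assms(2) and pin = assms(3) and hyp = assms(4)
  define p where "p t = occ M (pol t) h" for t
  define C0 where "C0 = enn2real (cov1 M PP h)"
  have C0: "0 \<le> C0" unfolding C0_def by simp
  have covC0: "cov1 M PP h = ennreal C0" unfolding C0_def using ne by (simp add: ennreal_enn2real_if)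
  define F where "F c = 2 * c powr (1/3) * (\<beta>\<^sup>2 * B + B ^ 3) powr (1/3) * real T powr (2/3)" for c
  have Fnn: "0 \<le> F c" for c unfolding F_def by simp
  let ?L = "\<Sum>t\<in>{1..T}. expect M (pol t) h (g t)"
  have "?L \<le> F C0"
  proof (cases "T = 0")
    case True then show ?thesis using Fnn by simp
  next
    case False
    then have T: "0 < T" by simp
    have "1 \<in> {1..T}" using T by simp
    from gb[OF this] have B0: "0 \<le> B" by (meson order_trans)
    show ?thesis
    proof (cases "B = 0")
      case True
      have "expect M (pol t) h (g t) = 0" if "t \<in> {1..T}" for t
      proof -
        have "g t = (\<lambda>_. 0)" using gb[OF that] True by (intro ext) (simp add: order_antisym)
        then show ?thesis unfolding expect_def by simp
      qed
      then have "?L = 0" by simp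
      then show ?thesis using Fnn by simp
    next
      case False
      then have B: "0 < B" using B0 by simp
      have main: "?L \<le> F Cp" if Cp: "C0 < Cp" for Cp
      proof -
        have "cov1 M PP h < ennreal Cp" using covC0 Cp C0 by (simp add: ennreal_less_iff)
        then obtain mu where mu: "(SUP q\<in>PP. \<integral>\<^sup>+ z. ennreal (pmf (occ M q h) z) / ennreal (pmf mu z) \<partial>(measure_pmf (occ M q h))) < ennreal Cp"
          unfolding cov1_def by (auto simp: INF_less_iff)
        have cov: "(\<integral>\<^sup>+ z. ennreal (pmf (p t) z) / ennreal (pmf mu z) \<partial>measure_pmf (p t)) \<le> ennreal Cp"
          if t: "t \<in> {1..T}" for t
        proof -
          have "(\<integral>\<^sup>+ z. ennreal (pmf (p t) z) / ennreal (pmf mu z) \<partial>measure_pmf (p t))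
             \<le> (SUP q\<in>PP. \<integral>\<^sup>+ z. ennreal (pmf (occ M q h) z) / ennreal (pmf mu z) \<partial>(measure_pmf (occ M q h)))"
            unfolding p_def by (rule SUP_upper) (rule pin[OF t])
          then show ?thesis using mu by simp
        qed
        have hyp': "(\<Sum>i\<in>{1..<t}. measure_pmf.expectation (p i) (\<lambda>z. (g t z)\<^sup>2)) \<le> \<beta>\<^sup>2"
          if t: "t \<in> {1..T}" for t
          using hyp[OF t] unfolding p_def expect_def .
        have "(\<Sum>t\<in>{1..T}. measure_pmf.expectation (p t) (g t)) \<le> F Cp"
          unfolding F_def by (rule core1[OF gb cov hyp' B]) (use Cp C0 T in auto)
        then show ?thesis unfolding p_def expect_def .
      qed
      define Cn where "Cn n = C0 + 1 / (real n + 1)" for n :: nat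
      have lim: "Cn \<longlonglongrightarrow> C0"
        unfolding Cn_def using tendsto_add[OF tendsto_const[of C0] LIMSEQ_inverse_real_of_nat] by (simp add: inverse_eq_divide add.commute)
      have "(\<lambda>n. F (Cn n)) \<longlonglongrightarrow> F C0"
        unfolding F_def using C0 by (intro tendsto_intros lim) (auto simp: Cn_def)
      moreover have "\<exists>N. \<forall>n\<ge>N. ?L \<le> F (Cn n)"
        by (intro exI[of _ 0] allI impI main) (simp add: Cn_def)
      ultimately show ?thesis by (rule LIMSEQ_le_const)
    qed
  qed
  then show "?L \<le> 2 * enn2real (cov1 M PP h) powr (1/3) * (\<beta>\<^sup>2 * B + B ^ 3) powr (1/3)
          * real T powr (2/3)" unfolding F_def C0_def .
qed

end
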